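(* Let $T$ be a tree. Then $\phi(K_1\nabla T)=\lfloor v(T)/2\rfloor$.
   Context: $v(T)$ is the number of vertices of $T$; $K_1\nabla T$ is obtained from $T$ by adding a new vertex adjacent to all vertices of $T$. For a graph $G$, $\phi(G)$ is the maximum number of pairwise edge-disjoint cycles in $G$. *)

theory Defs
  imports Main
begin

definition simple_graph :: "'a set \<Rightarrow> 'a set set \<Rightarrow> bool" where
  "simple_graph V E \<longleftrightarrow> finite V \<and>
     (\<forall>e\<in>E. \<exists>u v. u \<noteq> v \<and> u \<in> V \<and> v \<in> V \<and> e = {u, v})"

definition connected_graph :: "'a set \<Rightarrow> 'a set set \<Rightarrow> bool" where
  "connected_graph V E \<longleftrightarrow> V \<noteq> {} \<and>
     (\<forall>u\<in>V. \<forall>v\<in>V. (\<lambda>x y. {x, y} \<in> E)\<^sup>*\<^sup>* u v)"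

definition is_cycle_list :: "'a set set \<Rightarrow> 'a list \<Rightarrow> bool" where
  "is_cycle_list E vs \<longleftrightarrow> length vs \<ge> 3 \<and> distinct vs \<and>
     (\<forall>i < length vs. {vs ! i, vs ! ((i + 1) mod length vs)} \<in> E)"

definition cycle_edges :: "'a list \<Rightarrow> 'a set set" where
  "cycle_edges vs = {{vs ! i, vs ! ((i + 1) mod length vs)} | i. i < length vs}"

definition cycles :: "'a set \<Rightarrow> 'a set set \<Rightarrow> 'a set set set" where
  "cycles V E = {cycle_edges vs | vs. set vs \<subseteq> V \<and> is_cycle_list E vs}"

definition is_tree :: "'a set \<Rightarrow> 'a set set \<Rightarrow> bool" where
  "is_tree V E \<longleftrightarrow> simple_graph V E \<and> connected_graph V E \<and> cycles V E = {}"

definition phi :: "'a set \<Rightarrow> 'a set set \<Rightarrow> nat" where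
  "phi V E = Max {card F | F. F \<subseteq> cycles V E \<and> pairwise disjnt F}"

text \<open>K_1 \<nabla> T: new vertex None adjacent to all (Some-tagged) vertices of T.\<close>
definition cone_vertices :: "'a set \<Rightarrow> 'a option set" where
  "cone_vertices V = insert None (Some ` V)"

definition cone_edges :: "'a set \<Rightarrow> 'a set set \<Rightarrow> 'a option set set" where
  "cone_edges V E = (image Some) ` E \<union> {{None, Some v} | v. v \<in> V}"

end

theory Submission
  imports Defs
begin


fun pedges :: "'a list \<Rightarrow> 'a set set" where
  "pedges (x # y # xs) = insert {x, y} (pedges (y # xs))"
| "pedges _ = {}"

lemma pedges_nth: "pedges p = {{p!i, p!Suc i} | i. Suc i < length p}"
proof (induction p rule: pedges.induct)
  case (1 x y xs)
  have "{{(x#y#xs)!i, (x#y#xs)!Suc i} | i. Suc i < length (x#y#xs)}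
      = insert {x,y} {{(y#xs)!i, (y#xs)!Suc i} | i. Suc i < length (y#xs)}"
  proof (rule set_eqI, rule iffI)
    fix e assume "e \<in> {{(x#y#xs)!i, (x#y#xs)!Suc i} | i. Suc i < length (x#y#xs)}"
    then obtain i where i: "e = {(x#y#xs)!i, (x#y#xs)!Suc i}" "Suc i < length (x#y#xs)" by blast
    show "e \<in> insert {x,y} {{(y#xs)!i, (y#xs)!Suc i} | i. Suc i < length (y#xs)}"
    proof (cases i)
      case 0 then show ?thesis using i by simp
    next
      case (Suc k) then show ?thesis using i by auto
    qed
  next
    fix e assume "e \<in> insert {x,y} {{(y#xs)!i, (y#xs)!Suc i} | i. Suc i < length (y#xs)}"
    then show "e \<in> {{(x#y#xs)!i, (x#y#xs)!Suc i} | i. Suc i < length (x#y#xs)}"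
    proof
      assume "e = {x,y}" then show ?thesis by force
    next
      assume "e \<in> {{(y#xs)!i, (y#xs)!Suc i} | i. Suc i < length (y#xs)}"
      then obtain i where i: "e = {(y#xs)!i, (y#xs)!Suc i}" "Suc i < length (y#xs)" by blast
      then have "e = {(x#y#xs)!Suc i, (x#y#xs)!Suc (Suc i)}" "Suc (Suc i) < length (x#y#xs)" by auto
      then show ?thesis by blast
    qed
  qed
  then show ?case using 1 by simp
next
  case "2_1" then show ?case by simp
next
  case "2_2" then show ?case by simp
qed

lemma pedges_append: "pedges (xs @ [y]) = (if xs = [] then {} else insert {last xs, y} (pedges xs))"
  by (induction xs rule: pedges.induct) (auto simp: insert_commute)

lemma pedges_map: "pedges (map f p) = (\<lambda>e. f ` e) ` pedges p"
  by (induction p rule: pedges.induct) auto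

lemma pedges_sub: "e \<in> pedges p \<Longrightarrow> e \<subseteq> set p"
  by (induction p rule: pedges.induct) auto

lemma cycle_edges_eq:
  assumes "vs \<noteq> []"
  shows "cycle_edges vs = insert {last vs, hd vs} (pedges vs)"
proof -
  let ?L = "length vs"
  have L: "?L > 0" using assms by simp
  show ?thesis unfolding cycle_edges_def pedges_nth
  proof (rule set_eqI, rule iffI)
    fix e assume "e \<in> {{vs ! i, vs ! ((i + 1) mod ?L)} | i. i < ?L}"
    then obtain i where i: "e = {vs ! i, vs ! ((i + 1) mod ?L)}" "i < ?L" by blast
    show "e \<in> insert {last vs, hd vs} {{vs!i, vs!Suc i} | i. Suc i < ?L}"
    proof (cases "Suc i < ?L")
      case True then show ?thesis using i by auto
    next
      case False then have "i = ?L - 1" using i by simp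
      then have "e = {last vs, hd vs}" using i assms L
        by (simp add: last_conv_nth hd_conv_nth)
      then show ?thesis by simp
    qed
  next
    fix e assume "e \<in> insert {last vs, hd vs} {{vs!i, vs!Suc i} | i. Suc i < ?L}"
    then show "e \<in> {{vs ! i, vs ! ((i + 1) mod ?L)} | i. i < ?L}"
    proof
      assume e: "e = {last vs, hd vs}"
      have "e = {vs ! (?L - 1), vs ! (((?L - 1) + 1) mod ?L)}" using e assms L
        by (simp add: last_conv_nth hd_conv_nth)
      moreover have "?L - 1 < ?L" using L by simp
      ultimately show ?thesis by blast
    next
      assume "e \<in> {{vs!i, vs!Suc i} | i. Suc i < ?L}"
      then obtain i where i: "e = {vs!i, vs!Suc i}" "Suc i < ?L" by blast
      then have "e = {vs ! i, vs ! ((i + 1) mod ?L)}" "i < ?L" by auto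
      then show ?thesis by blast
    qed
  qed
qed



lemma finite_pedges: "finite (pedges p)"
  by (induction p rule: pedges.induct) simp_all

lemma finite_E: "simple_graph V E \<Longrightarrow> finite E"
proof -
  assume s: "simple_graph V E"
  then have "E \<subseteq> Pow V" unfolding simple_graph_def by fastforce
  moreover have "finite V" using s unfolding simple_graph_def by blast
  ultimately show ?thesis by (simp add: finite_subset)
qed

lemma cone_Some_edge: "{Some x, Some y} \<in> cone_edges V E \<Longrightarrow> {x, y} \<in> E"
proof -
  assume "{Some x, Some y} \<in> cone_edges V E"
  then consider e where "e \<in> E" "Some ` e = {Some x, Some y}" | v where "{None, Some v} = {Some x, Some y}"
    unfolding cone_edges_def by blast
  then show ?thesis
  proof cases
    case 1
    have "Some ` e = Some ` {x, y}" using 1 by simp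
    then have "e = {x, y}" by (rule inj_image_eq_iff[THEN iffD1, OF inj_Some])
    then show ?thesis using 1 by simp
  next
    case 2
    have "None \<in> {Some x, Some y}" using 2 by blast
    then show ?thesis by simp
  qed
qed

lemma cycle_list_sub: "is_cycle_list E vs \<Longrightarrow> cycle_edges vs \<subseteq> E"
  unfolding is_cycle_list_def cycle_edges_def by auto

lemma cone_cycle_has_None:
  assumes nc: "cycles V E = {}"
    and vs: "set vs \<subseteq> cone_vertices V" "is_cycle_list (cone_edges V E) vs"
  shows "None \<in> set vs"
proof (rule ccontr)
  assume nn: "None \<notin> set vs"
  define ws where "ws = map the vs"
  have vsw: "vs = map Some ws" unfolding ws_def using nn
    by (induction vs) auto
  have sw: "set ws \<subseteq> V" using vs(1) unfolding vsw cone_vertices_def by auto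
  have dw: "distinct ws" using vs(2) unfolding vsw is_cycle_list_def by (simp add: distinct_map)
  have lw: "length ws = length vs" unfolding vsw by simp
  have "\<forall>i < length ws. {ws ! i, ws ! ((i + 1) mod length ws)} \<in> E"
  proof (intro allI impI)
    fix i assume i: "i < length ws"
    have m: "(i + 1) mod length ws < length ws" using i by (metis mod_less_divisor gr_implies_not0 gr0I less_nat_zero_code)
    have "{vs ! i, vs ! ((i + 1) mod length vs)} \<in> cone_edges V E"
      using vs(2) i lw unfolding is_cycle_list_def by auto
    then have "{Some (ws ! i), Some (ws ! ((i + 1) mod length ws))} \<in> cone_edges V E"
      using i m unfolding vsw by simp
    then show "{ws ! i, ws ! ((i + 1) mod length ws)} \<in> E" by (rule cone_Some_edge)
  qed
  then have "is_cycle_list E ws" using vs(2) dw lw unfolding is_cycle_list_def by simp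
  then have "cycle_edges ws \<in> cycles V E" using sw unfolding cycles_def by blast
  then show False using nc by simp
qed

lemma mod_helper:
  fixes i L :: nat
  assumes "i < L" "3 \<le> L"
  defines "j \<equiv> (i + (L - 1)) mod L"
  shows "j \<noteq> (i + 1) mod L" "(i + 1) mod L \<noteq> i" "(j + 1) mod L = i" "j \<noteq> i" "j < L"
proof -
  have jv: "j = (if i = 0 then L - 1 else i - 1)"
  proof (cases "i = 0")
    case True then show ?thesis using assms unfolding j_def by simp
  next
    case False
    then have "i + (L - 1) = (i - 1) + L" using assms by simp
    then have "j = (i - 1) mod L" unfolding j_def by simp
    then show ?thesis using False assms by simp
  qed
  have iv: "(i + 1) mod L = (if i + 1 = L then 0 else i + 1)" using assms by simp
  show "j \<noteq> (i + 1) mod L" using jv iv assms by auto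
  show "(i + 1) mod L \<noteq> i" using iv assms by auto
  show "(j + 1) mod L = i" using jv assms by auto
  show "j \<noteq> i" using jv assms by auto
  show "j < L" using jv assms by auto
qed

lemma cone_cycle_two:
  assumes nc: "cycles V E = {}"
    and C: "C \<in> cycles (cone_vertices V) (cone_edges V E)"
  shows "2 \<le> card {e\<in>C. None \<in> e}" "finite C" "C \<subseteq> cone_edges V E"
proof -
  obtain vs where C: "C = cycle_edges vs" and vs: "set vs \<subseteq> cone_vertices V"
     "is_cycle_list (cone_edges V E) vs" using C unfolding cycles_def by blast
  let ?L = "length vs"
  have L: "3 \<le> ?L" and dv: "distinct vs" using vs(2) unfolding is_cycle_list_def by auto
  have "None \<in> set vs" using cone_cycle_has_None[OF nc vs] .
  then obtain i where i: "i < ?L" "vs ! i = None" by (metis in_set_conv_nth)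
  define j where "j = (i + (?L - 1)) mod ?L"
  note mh = mod_helper[OF i(1) L, folded j_def]
  define e1 where "e1 = {vs ! i, vs ! ((i + 1) mod ?L)}"
  define e2 where "e2 = {vs ! j, vs ! ((j + 1) mod ?L)}"
  have e2': "e2 = {vs ! j, None}" unfolding e2_def using mh i by simp
  have e1': "e1 = {None, vs ! ((i + 1) mod ?L)}" unfolding e1_def using i by simp
  have i1: "(i + 1) mod ?L < ?L" by (rule mod_less_divisor) (use L in linarith)
  have ne1: "vs ! j \<noteq> vs ! ((i + 1) mod ?L)" using dv mh i1 by (simp add: nth_eq_iff_index_eq)
  have ne2: "vs ! j \<noteq> None" using dv mh i by (metis nth_eq_iff_index_eq)
  have "e1 \<noteq> e2" unfolding e1' e2' using ne1 ne2 by (auto simp: doubleton_eq_iff)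
  have "e1 \<in> C" unfolding C cycle_edges_def e1_def using i by blast
  moreover have "e2 \<in> C" unfolding C cycle_edges_def e2_def using mh by blast
  ultimately have sub: "{e1, e2} \<subseteq> {e\<in>C. None \<in> e}" unfolding e1' e2' by auto
  have vne: "vs \<noteq> []" using L by auto
  show fC: "finite C" unfolding C cycle_edges_eq[OF vne] by (simp add: finite_pedges)
  have "card {e1, e2} = 2" using \<open>e1 \<noteq> e2\<close> by simp
  then show "2 \<le> card {e\<in>C. None \<in> e}" using card_mono[OF _ sub] fC by simp
  show "C \<subseteq> cone_edges V E" unfolding C using cycle_list_sub[OF vs(2)] .
qed

lemma finite_cone_edges: "simple_graph V E \<Longrightarrow> finite (cone_edges V E)"
proof -
  assume s: "simple_graph V E"
  have "finite E" using finite_E[OF s] .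
  moreover have "finite V" using s unfolding simple_graph_def by blast
  moreover have "{{None, Some v} | v. v \<in> V} = (\<lambda>v. {None, Some v}) ` V" by blast
  ultimately show ?thesis unfolding cone_edges_def by simp
qed

lemma upper:
  fixes V :: "'a set"
  assumes t: "is_tree V E"
    and F: "F \<subseteq> cycles (cone_vertices V) (cone_edges V E)" "pairwise disjnt F"
  shows "card F \<le> card V div 2"
proof -
  have s: "simple_graph V E" and nc: "cycles V E = {}" and fV: "finite V"
    using t unfolding is_tree_def simple_graph_def by auto
  define NE where "NE = (\<lambda>v. {None, Some v}) ` V"
  define N where "N = (\<lambda>C :: 'a option set set. {e\<in>C. None \<in> e})"
  have "cycles (cone_vertices V) (cone_edges V E) \<subseteq> Pow (cone_edges V E)"
    using cone_cycle_two(3)[OF nc] by blast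
  then have fF: "finite F" using F(1) finite_cone_edges[OF s]
    by (meson finite_Pow_iff finite_subset)
  have NsubNE: "N C \<subseteq> NE" if "C \<in> F" for C
  proof
    fix e assume e: "e \<in> N C"
    then have "e \<in> cone_edges V E" "None \<in> e"
      using cone_cycle_two(3)[OF nc] that F(1) unfolding N_def by auto
    then show "e \<in> NE" unfolding cone_edges_def NE_def by auto
  qed
  have fN: "finite (N C)" if "C \<in> F" for C
    using cone_cycle_two(2)[OF nc] that F(1) unfolding N_def by auto
  have dN: "\<forall>C\<in>F. \<forall>D\<in>F. C \<noteq> D \<longrightarrow> N C \<inter> N D = {}"
    using F(2) unfolding pairwise_def disjnt_def N_def by blast
  have "2 * card F = (\<Sum>C\<in>F. 2)" by simp
  also have "\<dots> \<le> (\<Sum>C\<in>F. card (N C))"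
    by (rule sum_mono) (use cone_cycle_two(1)[OF nc] F(1) in \<open>auto simp: N_def\<close>)
  also have "\<dots> = card (\<Union>C\<in>F. N C)"
    using card_UN_disjoint[OF fF _ dN] fN by simp
  also have "\<dots> \<le> card NE"
    using NsubNE by (intro card_mono) (auto simp: NE_def fV)
  also have "\<dots> \<le> card V" unfolding NE_def by (rule card_image_le[OF fV])
  finally show ?thesis by simp
qed



lemma is_cycle_list_iff:
  "is_cycle_list E vs \<longleftrightarrow> 3 \<le> length vs \<and> distinct vs \<and> cycle_edges vs \<subseteq> E"
  unfolding is_cycle_list_def cycle_edges_def by blast

lemma pedges_drop: "pedges (drop k p) \<subseteq> pedges p"
proof
  fix e assume "e \<in> pedges (drop k p)"
  then obtain i where i: "e = {drop k p ! i, drop k p ! Suc i}" "Suc i < length (drop k p)"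
    unfolding pedges_nth by blast
  then have "e = {p ! (k + i), p ! Suc (k + i)}" "Suc (k + i) < length p" by auto
  then show "e \<in> pedges p" unfolding pedges_nth by blast
qed

lemma leaf_exists:
  assumes t: "is_tree V E" and c: "2 \<le> card V"
  shows "\<exists>a b. a \<in> V \<and> b \<in> V \<and> a \<noteq> b \<and> {a, b} \<in> E \<and> (\<forall>w. {a, w} \<in> E \<longrightarrow> w = b)"
proof -
  have s: "simple_graph V E" and nc: "cycles V E = {}"
    and cn: "connected_graph V E"
    using t unfolding is_tree_def by auto
  have fV: "finite V" using s unfolding simple_graph_def by blast
  have edge: "x \<noteq> y \<and> x \<in> V \<and> y \<in> V" if "{x, y} \<in> E" for x y
  proof -
    have "\<exists>u v. u \<noteq> v \<and> u \<in> V \<and> v \<in> V \<and> {x, y} = {u, v}"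
      using bspec[OF conjunct2[OF s[unfolded simple_graph_def]] that] .
    then obtain u v where "u \<noteq> v" "u \<in> V" "v \<in> V" "{x, y} = {u, v}" by blast
    then show ?thesis by (auto simp: doubleton_eq_iff)
  qed
  have "V \<noteq> {}" using c by auto
  then obtain u where u: "u \<in> V" by blast
  have "card (V - {u}) \<ge> 1" using c u fV by simp
  then have "V - {u} \<noteq> {}" by (metis card.empty not_one_le_zero)
  then obtain w where w: "w \<in> V" "w \<noteq> u" by blast
  have "(\<lambda>x y. {x, y} \<in> E)\<^sup>*\<^sup>* u w" using cn u w unfolding connected_graph_def by blast
  then obtain y where y: "{u, y} \<in> E"
    using w(2) by (cases rule: converse_rtranclpE) auto
  define P where "P = {p. distinct p \<and> set p \<subseteq> V \<and> pedges p \<subseteq> E}"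
  have bnd: "length p \<le> card V" if "p \<in> P" for p
    using that fV unfolding P_def by (metis card_mono distinct_card mem_Collect_eq)
  have fin: "finite (length ` P)"
    using bnd by (auto simp: finite_nat_set_iff_bounded_le)
  have uyP: "[u, y] \<in> P" unfolding P_def using y edge[OF y] by auto
  define m where "m = Max (length ` P)"
  have "m \<in> length ` P" unfolding m_def using fin uyP by (intro Max_in) auto
  then obtain p where p: "p \<in> P" "length p = m" by blast
  have pmax: "length q \<le> m" if "q \<in> P" for q unfolding m_def using fin that by simp
  have m2: "2 \<le> m" using pmax[OF uyP] by simp
  have dp: "distinct p" and sp: "set p \<subseteq> V" and ep: "pedges p \<subseteq> E" using p(1) unfolding P_def by auto
  define a where "a = last p"
  define b where "b = p ! (m - 2)"
  have pne: "p \<noteq> []" using p m2 by auto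
  have aidx: "a = p ! (m - 1)" unfolding a_def using pne p by (simp add: last_conv_nth)
  have "{p ! (m - 2), p ! Suc (m - 2)} \<in> pedges p" unfolding pedges_nth using p m2 by force
  moreover have "Suc (m - 2) = m - 1" using m2 by simp
  ultimately have "{b, a} \<in> E" using ep unfolding aidx b_def by auto
  then have ab: "{a, b} \<in> E" by (simp add: insert_commute)
  have abd: "a \<noteq> b \<and> a \<in> V \<and> b \<in> V" using edge[OF ab] .
  have uniq: "x = b" if x: "{a, x} \<in> E" for x
  proof (rule ccontr)
    assume xb: "x \<noteq> b"
    have xa: "x \<noteq> a" "x \<in> V" using edge[OF x] by auto
    show False
    proof (cases "x \<in> set p")
      case False
      have "p @ [x] \<in> P" unfolding P_def using dp sp ep False xa x pne
        by (auto simp: pedges_append a_def)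
      then show False using pmax p by fastforce
    next
      case True
      then obtain k where k: "k < m" "p ! k = x" using p by (metis in_set_conv_nth)
      have "k \<noteq> m - 1" using k xa aidx by auto
      moreover have "k \<noteq> m - 2" using k xb b_def by auto
      ultimately have k3: "k + 3 \<le> m" using k by linarith
      define vs where "vs = drop k p"
      have lv: "length vs = m - k" unfolding vs_def using p by simp
      have vne: "vs \<noteq> []" using lv k3 by auto
      have "last vs = a" unfolding vs_def a_def using k p by simp
      moreover have "hd vs = x" unfolding vs_def using k p by (simp add: hd_drop_conv_nth)
      ultimately have "cycle_edges vs \<subseteq> E"
        unfolding cycle_edges_eq[OF vne] using x pedges_drop[of k p] ep vs_def by auto
      moreover have "distinct vs" unfolding vs_def using dp by simp
      ultimately have "is_cycle_list E vs" using lv k3 unfolding is_cycle_list_iff by simp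
      moreover have "set vs \<subseteq> V" unfolding vs_def using sp set_drop_subset by fastforce
      ultimately have "cycle_edges vs \<in> cycles V E" unfolding cycles_def by blast
      then show False using nc by simp
    qed
  qed
  show ?thesis using ab abd uniq by blast
qed



lemma edge_of:
  assumes s: "simple_graph V E" and e: "{x, y} \<in> E"
  shows "x \<noteq> y \<and> x \<in> V \<and> y \<in> V"
proof -
  have "\<exists>u v. u \<noteq> v \<and> u \<in> V \<and> v \<in> V \<and> {x, y} = {u, v}"
    using bspec[OF conjunct2[OF s[unfolded simple_graph_def]] e] .
  then obtain u v where "u \<noteq> v" "u \<in> V" "v \<in> V" "{x, y} = {u, v}" by blast
  then show ?thesis by (auto simp: doubleton_eq_iff)
qed

lemma rtranclp_sym_edges:
  "(\<lambda>x y. {x, y} \<in> E)\<^sup>*\<^sup>* u w \<Longrightarrow> (\<lambda>x y. {x, y} \<in> E)\<^sup>*\<^sup>* w u"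
proof (induction rule: rtranclp.induct)
  case (rtrancl_refl a) then show ?case by simp
next
  case (rtrancl_into_rtrancl a b c)
  have "{c, b} \<in> E" using rtrancl_into_rtrancl(2) by (simp add: insert_commute)
  then show ?case using rtrancl_into_rtrancl(3)
    by (simp add: converse_rtranclp_into_rtranclp)
qed

lemma tree_remove_leaf:
  assumes t: "is_tree V E" and a: "a \<in> V" "b \<in> V" "a \<noteq> b" "{a, b} \<in> E"
    and u: "\<forall>w. {a, w} \<in> E \<longrightarrow> w = b"
  shows "is_tree (V - {a}) (E - {{a, b}})"
proof -
  have s: "simple_graph V E" and nc: "cycles V E = {}"
    and cn: "connected_graph V E"
    using t unfolding is_tree_def by auto
  have fV: "finite V" using s unfolding simple_graph_def by blast
  let ?E = "E - {{a, b}}"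
  have noa: "x \<noteq> a \<and> y \<noteq> a" if "{x, y} \<in> ?E" for x y
  proof
    show "x \<noteq> a"
    proof
      assume "x = a" then have "y = b" using u that by auto
      then show False using that \<open>x = a\<close> by auto
    qed
    show "y \<noteq> a"
    proof
      assume "y = a" then have "{a, x} \<in> E" using that by (auto simp: insert_commute)
      then have "x = b" using u by auto
      then show False using that \<open>y = a\<close> by (auto simp: insert_commute)
    qed
  qed
  have s': "simple_graph (V - {a}) ?E"
    unfolding simple_graph_def
  proof (intro conjI ballI)
    show "finite (V - {a})" using fV by simp
    fix e assume e: "e \<in> ?E"
    then have "e \<in> E" by simp
    then have "\<exists>u v. u \<noteq> v \<and> u \<in> V \<and> v \<in> V \<and> e = {u, v}"
      using s unfolding simple_graph_def by blast
    then obtain x y where xy: "x \<noteq> y" "x \<in> V" "y \<in> V" "e = {x, y}" by blast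
    then have "x \<noteq> a \<and> y \<noteq> a" using noa e by simp
    then show "\<exists>u v. u \<noteq> v \<and> u \<in> V - {a} \<and> v \<in> V - {a} \<and> e = {u, v}" using xy by blast
  qed
  have nc': "cycles (V - {a}) ?E = {}"
  proof (rule ccontr)
    assume "cycles (V - {a}) ?E \<noteq> {}"
    then obtain vs where "set vs \<subseteq> V - {a}" "is_cycle_list ?E vs" unfolding cycles_def by blast
    then have "set vs \<subseteq> V" "is_cycle_list E vs" unfolding is_cycle_list_iff by auto
    then have "cycle_edges vs \<in> cycles V E" unfolding cycles_def by blast
    then show False using nc by simp
  qed
  let ?R = "\<lambda>x y. {x, y} \<in> E"
  let ?R' = "\<lambda>x y. {x, y} \<in> ?E"
  have reach: "z = a \<or> ?R'\<^sup>*\<^sup>* b z" if "?R\<^sup>*\<^sup>* b z" for z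
    using that
  proof (induction rule: rtranclp_induct)
    case base then show ?case by simp
  next
    case (step y z)
    show ?case
    proof (cases "y = a")
      case True
      then have "z = b" using u step(2) by auto
      then show ?thesis by simp
    next
      case False
      then have yR: "?R'\<^sup>*\<^sup>* b y" using step(3) by simp
      show ?thesis
      proof (cases "z = a")
        case True then show ?thesis by simp
      next
        case False
        have "{y, z} \<noteq> {a, b}" using \<open>y \<noteq> a\<close> False by (auto simp: doubleton_eq_iff)
        then have "?R' y z" using step(2) by simp
        then show ?thesis using yR by (simp add: rtranclp.rtrancl_into_rtrancl)
      qed
    qed
  qed
  have cn': "connected_graph (V - {a}) ?E"
    unfolding connected_graph_def
  proof (intro conjI ballI)
    show "V - {a} \<noteq> {}" using a by blast
    fix x y assume xy: "x \<in> V - {a}" "y \<in> V - {a}"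
    have "?R\<^sup>*\<^sup>* b x" "?R\<^sup>*\<^sup>* b y" using cn a xy unfolding connected_graph_def by auto
    then have "?R'\<^sup>*\<^sup>* b x" "?R'\<^sup>*\<^sup>* b y" using reach xy by auto
    then show "?R'\<^sup>*\<^sup>* x y" using rtranclp_sym_edges[of ?E b x]
      by (meson rtranclp_trans)
  qed
  show ?thesis unfolding is_tree_def using s' nc' cn' by blast
qed



definition pgood :: "'a set set \<Rightarrow> 'a set \<Rightarrow> 'a set \<Rightarrow> 'a list set \<Rightarrow> bool" where
  "pgood E V S P \<longleftrightarrow> finite P \<and>
     (\<forall>p\<in>P. distinct p \<and> 2 \<le> length p \<and> set p \<subseteq> V \<and> pedges p \<subseteq> E) \<and>
     (\<forall>p\<in>P. \<forall>q\<in>P. p \<noteq> q \<longrightarrow> pedges p \<inter> pedges q = {} \<and> {hd p, last p} \<inter> {hd q, last q} = {}) \<and>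
     (\<Union>p\<in>P. {hd p, last p}) = S"

lemma pgoodD1: "pgood E V S P \<Longrightarrow> finite P"
  unfolding pgood_def by simp
lemma pgoodD2: "pgood E V S P \<Longrightarrow> p \<in> P \<Longrightarrow> distinct p \<and> 2 \<le> length p \<and> set p \<subseteq> V \<and> pedges p \<subseteq> E"
  unfolding pgood_def by simp
lemma pgoodD3: "pgood E V S P \<Longrightarrow> p \<in> P \<Longrightarrow> q \<in> P \<Longrightarrow> p \<noteq> q \<Longrightarrow>
   pedges p \<inter> pedges q = {} \<and> {hd p, last p} \<inter> {hd q, last q} = {}"
  unfolding pgood_def by simp
lemma pgoodD4: "pgood E V S P \<Longrightarrow> (\<Union>p\<in>P. {hd p, last p}) = S"
  unfolding pgood_def by simp
lemma pgood_ends: "pgood E V S P \<Longrightarrow> p \<in> P \<Longrightarrow> {hd p, last p} \<subseteq> S"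
  using pgoodD4 by blast

lemma pgood_mono: assumes "pgood E' V' S P" "E' \<subseteq> E" "V' \<subseteq> V" shows "pgood E V S P"
  unfolding pgood_def
proof (intro conjI)
  show "finite P" using pgoodD1[OF assms(1)] .
  show "\<forall>p\<in>P. distinct p \<and> 2 \<le> length p \<and> set p \<subseteq> V \<and> pedges p \<subseteq> E"
    using pgoodD2[OF assms(1)] assms(2,3) by blast
  show "\<forall>p\<in>P. \<forall>q\<in>P. p \<noteq> q \<longrightarrow> pedges p \<inter> pedges q = {} \<and> {hd p, last p} \<inter> {hd q, last q} = {}"
    using pgoodD3[OF assms(1)] by blast
  show "(\<Union>p\<in>P. {hd p, last p}) = S" using pgoodD4[OF assms(1)] .
qed

lemma hd_last_ne: "distinct p \<Longrightarrow> 2 \<le> length p \<Longrightarrow> hd p \<noteq> last p"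
proof -
  assume d: "distinct p" and l: "2 \<le> length p"
  then have "p \<noteq> []" by auto
  then have "hd p = p ! 0" "last p = p ! (length p - 1)" by (simp_all add: hd_conv_nth last_conv_nth)
  moreover have "p ! 0 \<noteq> p ! (length p - 1)" using d l by (subst nth_eq_iff_index_eq) auto
  ultimately show ?thesis by simp
qed

lemma ends_sub: "p \<noteq> [] \<Longrightarrow> {hd p, last p} \<subseteq> set p"
  by auto

lemma pairing:
  assumes "is_tree V E" "S \<subseteq> V" "even (card S)"
  shows "\<exists>P. pgood E V S P"
  using assms
proof (induction "card V" arbitrary: V E S rule: less_induct)
  case less
  have s: "simple_graph V E" using less.prems(1) unfolding is_tree_def by blast
  have fV: "finite V" using s unfolding simple_graph_def by blast
  have fS: "finite S" using less.prems(2) fV finite_subset by blast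
  show ?case
  proof (cases "card V < 2")
    case True
    have "card S \<le> card V" using card_mono[OF fV less.prems(2)] .
    then have "card S = 0" using True less.prems(3) by presburger
    then have "S = {}" using fS by simp
    then have "pgood E V S {}" unfolding pgood_def by simp
    then show ?thesis by blast
  next
    case False
    then have c2: "2 \<le> card V" by simp
    obtain a b where ab: "a \<in> V" "b \<in> V" "a \<noteq> b" "{a, b} \<in> E"
      and u: "\<forall>w. {a, w} \<in> E \<longrightarrow> w = b"
      using leaf_exists[OF less.prems(1) c2] by blast
    let ?V = "V - {a}" and ?E = "E - {{a, b}}"
    have t': "is_tree ?V ?E" using tree_remove_leaf[OF less.prems(1) ab u] .
    have cV: "card ?V < card V" by (rule card_Diff1_less[OF fV ab(1)])
    have IH: "\<exists>P. pgood ?E ?V S' P" if "S' \<subseteq> ?V" "even (card S')" for S'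
      using less.hyps[OF cV t' that] .
    show ?thesis
    proof (cases "a \<in> S")
      case False
      then have "S \<subseteq> ?V" using less.prems(2) by blast
      then obtain P where "pgood ?E ?V S P" using IH less.prems(3) by blast
      then have "pgood E V S P" by (rule pgood_mono) auto
      then show ?thesis by blast
    next
      case aS: True
      show ?thesis
      proof (cases "b \<in> S")
        case bS: True
        let ?S = "S - {a, b}"
        have "card ?S = card S - 2" using aS bS ab(3) fS by (simp add: card_Diff_subset)
        moreover have "card S \<ge> 2"
        proof -
          have "card {a, b} \<le> card S" using aS bS fS by (intro card_mono) auto
          then show ?thesis using ab(3) by simp
        qed
        ultimately have eS: "even (card ?S)" using less.prems(3) by simp
        have "?S \<subseteq> ?V" using less.prems(2) by blast
        then obtain P where P: "pgood ?E ?V ?S P" using IH eS by blast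
        have Pq: "\<And>q. q \<in> P \<Longrightarrow> pedges q \<subseteq> ?E \<and> {hd q, last q} \<subseteq> ?S \<and> distinct q \<and> 2 \<le> length q \<and> set q \<subseteq> ?V"
          using pgoodD2[OF P] pgood_ends[OF P] by blast
        have "pgood E V S (insert [a, b] P)"
          unfolding pgood_def
        proof (intro conjI)
          show "finite (insert [a, b] P)" using pgoodD1[OF P] by simp
          show "\<forall>p\<in>insert [a, b] P. distinct p \<and> 2 \<le> length p \<and> set p \<subseteq> V \<and> pedges p \<subseteq> E"
            using Pq ab by auto
          have d1: "pedges [a, b] \<inter> pedges q = {} \<and> {hd [a, b], last [a, b]} \<inter> {hd q, last q} = {}"
            if "q \<in> P" for q using Pq[OF that] by auto
          show "\<forall>p\<in>insert [a, b] P. \<forall>q\<in>insert [a, b] P. p \<noteq> q \<longrightarrow>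
              pedges p \<inter> pedges q = {} \<and> {hd p, last p} \<inter> {hd q, last q} = {}"
          proof (intro ballI impI)
            fix q r assume q: "q \<in> insert [a, b] P" and r: "r \<in> insert [a, b] P" and qr: "q \<noteq> r"
            show "pedges q \<inter> pedges r = {} \<and> {hd q, last q} \<inter> {hd r, last r} = {}"
            proof (cases "q = [a, b]")
              case True
              then have "r \<in> P" using r qr by auto
              then show ?thesis using d1 True by blast
            next
              case False
              then have q': "q \<in> P" using q by auto
              show ?thesis
              proof (cases "r = [a, b]")
                case True then show ?thesis using d1[OF q'] by (auto simp: Int_commute)
              next
                case False
                then have "r \<in> P" using r by auto
                then show ?thesis using pgoodD3[OF P q'] qr by blast
              qed
            qed
          qed
          have "(\<Union>p\<in>insert [a, b] P. {hd p, last p}) = {a, b} \<union> (S - {a, b})"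
            using pgoodD4[OF P] by simp
          moreover have "{a, b} \<union> (S - {a, b}) = S" using aS bS by auto
          ultimately show "(\<Union>p\<in>insert [a, b] P. {hd p, last p}) = S" by simp
        qed
        then show ?thesis by blast
      next
        case bS: False
        let ?S = "insert b (S - {a})"
        have "card ?S = card S" using aS bS fS by (simp add: card_Diff1_le) (metis Suc_pred card_gt_0_iff empty_iff)
        then have eS: "even (card ?S)" using less.prems(3) by simp
        have "?S \<subseteq> ?V" using less.prems(2) ab by blast
        then obtain P where P: "pgood ?E ?V ?S P" using IH eS by blast
        have Pq: "\<And>q. q \<in> P \<Longrightarrow> pedges q \<subseteq> ?E \<and> {hd q, last q} \<subseteq> ?S \<and> distinct q \<and> 2 \<le> length q \<and> set q \<subseteq> ?V"
          using pgoodD2[OF P] pgood_ends[OF P] by blast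
        have Pd: "\<And>p q. p \<in> P \<Longrightarrow> q \<in> P \<Longrightarrow> p \<noteq> q \<Longrightarrow> pedges p \<inter> pedges q = {} \<and> {hd p, last p} \<inter> {hd q, last q} = {}"
          using pgoodD3[OF P] by blast
        have PU: "(\<Union>p\<in>P. {hd p, last p}) = ?S" using pgoodD4[OF P] .
        then obtain p where p: "p \<in> P" "b \<in> {hd p, last p}" by blast
        note pq = Pq[OF p(1)]
        have pne: "p \<noteq> []" using pq by auto
        have hl: "hd p \<noteq> last p" using pq hd_last_ne by blast
        have anp: "a \<notin> set p" using pq by auto
        define p2 where "p2 = (if last p = b then p @ [a] else a # p)"
        have p2e: "pedges p2 = insert {a, b} (pedges p)"
        proof (cases "last p = b")
          case True then show ?thesis unfolding p2_def using pne by (simp add: pedges_append insert_commute)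
        next
          case False
          then have "hd p = b" using p(2) by auto
          then obtain r where "p = b # r" using pne by (cases p) auto
          moreover have "r \<noteq> []" using pq calculation by auto
          ultimately show ?thesis unfolding p2_def using False by (cases r) auto
        qed
        have p2n: "{hd p2, last p2} = insert a ({hd p, last p} - {b})"
          unfolding p2_def using p(2) hl pne by auto
        have p2p: "distinct p2 \<and> 2 \<le> length p2 \<and> set p2 \<subseteq> V \<and> pedges p2 \<subseteq> E"
          unfolding p2e using pq anp ab unfolding p2_def by auto
        have d1: "pedges p2 \<inter> pedges q = {} \<and> {hd p2, last p2} \<inter> {hd q, last q} = {}"
          if q: "q \<in> P - {p}" for q
        proof -
          have qq: "pedges q \<subseteq> ?E" "{hd q, last q} \<subseteq> ?S" using Pq q by auto
          have "pedges p \<inter> pedges q = {}" "{hd p, last p} \<inter> {hd q, last q} = {}"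
            using Pd[OF p(1), of q] q by auto
          then show ?thesis unfolding p2e p2n using qq ab(3) by auto
        qed
        have "pgood E V S (insert p2 (P - {p}))"
          unfolding pgood_def
        proof (intro conjI)
          show "finite (insert p2 (P - {p}))" using pgoodD1[OF P] by simp
          show "\<forall>q\<in>insert p2 (P - {p}). distinct q \<and> 2 \<le> length q \<and> set q \<subseteq> V \<and> pedges q \<subseteq> E"
            using Pq p2p by auto
          show "\<forall>q\<in>insert p2 (P - {p}). \<forall>r\<in>insert p2 (P - {p}). q \<noteq> r \<longrightarrow>
              pedges q \<inter> pedges r = {} \<and> {hd q, last q} \<inter> {hd r, last r} = {}"
          proof (intro ballI impI)
            fix q r assume q: "q \<in> insert p2 (P - {p})" and r: "r \<in> insert p2 (P - {p})" and qr: "q \<noteq> r"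
            show "pedges q \<inter> pedges r = {} \<and> {hd q, last q} \<inter> {hd r, last r} = {}"
            proof (cases "q = p2")
              case True
              then have "r \<in> P - {p}" using r qr by auto
              then show ?thesis using d1 True by blast
            next
              case False
              then have q': "q \<in> P - {p}" using q by auto
              show ?thesis
              proof (cases "r = p2")
                case True then show ?thesis using d1[OF q'] by (auto simp: Int_commute)
              next
                case False
                then have "r \<in> P - {p}" using r by auto
                then show ?thesis using Pd q' qr by auto
              qed
            qed
          qed
          show "(\<Union>q\<in>insert p2 (P - {p}). {hd q, last q}) = S"
          proof (rule set_eqI, rule iffI)
            fix x assume "x \<in> (\<Union>q\<in>insert p2 (P - {p}). {hd q, last q})"
            then consider "x \<in> {hd p2, last p2}" | q where "q \<in> P - {p}" "x \<in> {hd q, last q}" by blast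
            then show "x \<in> S"
            proof cases
              case 1 then show ?thesis using p2n pq aS by auto
            next
              case 2
              then have "x \<in> ?S" using Pq by blast
              moreover have "x \<noteq> b" using 2 p Pd[OF p(1), of q] by auto
              ultimately show ?thesis by auto
            qed
          next
            fix x assume x: "x \<in> S"
            show "x \<in> (\<Union>q\<in>insert p2 (P - {p}). {hd q, last q})"
            proof (cases "x = a")
              case True then show ?thesis using p2n by auto
            next
              case False
              then have "x \<in> ?S" "x \<noteq> b" using x bS by auto
              then obtain q where q: "q \<in> P" "x \<in> {hd q, last q}" using PU by blast
              show ?thesis
              proof (cases "q = p")
                case True then show ?thesis using q p2n \<open>x \<noteq> b\<close> by auto
              next
                case False then show ?thesis using q by blast
              qed
            qed
          qed
        qed
        then show ?thesis by blast
      qed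
    qed
  qed
qed



definition Cyc :: "'a list \<Rightarrow> 'a option set set" where
  "Cyc p = cycle_edges (None # map Some p)"

lemma Cyc_eq:
  assumes "p \<noteq> []"
  shows "Cyc p = insert {Some (last p), None} (insert {None, Some (hd p)} ((\<lambda>e. Some ` e) ` pedges p))"
proof -
  obtain x xs where p: "p = x # xs" using assms by (cases p) auto
  have "pedges (None # map Some p) = insert {None, Some (hd p)} (pedges (map Some p))"
    unfolding p by simp
  moreover have "last (None # map Some p) = Some (last p)" using assms by (simp add: last_map)
  ultimately show ?thesis unfolding Cyc_def using cycle_edges_eq[of "None # map Some p"]
    by (simp add: pedges_map)
qed

lemma Cyc_in:
  assumes "distinct p" "2 \<le> length p" "set p \<subseteq> V" "pedges p \<subseteq> E"
  shows "Cyc p \<in> cycles (cone_vertices V) (cone_edges V E)"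
proof -
  have pne: "p \<noteq> []" using assms(2) by auto
  let ?vs = "None # map Some p"
  have sv: "set ?vs \<subseteq> cone_vertices V" using assms(3) unfolding cone_vertices_def by auto
  have dv: "distinct ?vs" using assms(1) by (auto simp: distinct_map)
  have lv: "3 \<le> length ?vs" using assms(2) by simp
  have hl: "hd p \<in> V" "last p \<in> V" using assms(3) pne by auto
  have "Cyc p \<subseteq> cone_edges V E"
  proof
    fix e assume "e \<in> Cyc p"
    then consider "e = {Some (last p), None}" | "e = {None, Some (hd p)}" | f where "f \<in> pedges p" "e = Some ` f"
      unfolding Cyc_eq[OF pne] by blast
    then show "e \<in> cone_edges V E"
    proof cases
      case 1
      then have "e = {None, Some (last p)}" by auto
      then show ?thesis using hl unfolding cone_edges_def by blast
    next
      case 2 then show ?thesis using hl unfolding cone_edges_def by blast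
    next
      case 3 then show ?thesis using assms(4) unfolding cone_edges_def by blast
    qed
  qed
  then have "is_cycle_list (cone_edges V E) ?vs" unfolding is_cycle_list_iff Cyc_def using lv dv by simp
  then show ?thesis using sv unfolding cycles_def Cyc_def by blast
qed

lemma Cyc_disj:
  assumes "p \<noteq> []" "q \<noteq> []" "pedges p \<inter> pedges q = {}" "{hd p, last p} \<inter> {hd q, last q} = {}"
  shows "Cyc p \<inter> Cyc q = {}"
proof (rule ccontr)
  assume "Cyc p \<inter> Cyc q \<noteq> {}"
  then obtain e where e: "e \<in> Cyc p" "e \<in> Cyc q" by blast
  show False
  proof (cases "None \<in> e")
    case True
    have "\<exists>x\<in>{hd p, last p}. e = {None, Some x}" using e(1) True unfolding Cyc_eq[OF assms(1)] by auto
    then obtain x where x: "x \<in> {hd p, last p}" "e = {None, Some x}" by blast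
    have "\<exists>y\<in>{hd q, last q}. e = {None, Some y}" using e(2) True unfolding Cyc_eq[OF assms(2)] by auto
    then obtain y where y: "y \<in> {hd q, last q}" "e = {None, Some y}" by blast
    have "x = y" using x(2) y(2) by (auto simp: doubleton_eq_iff)
    then show False using x(1) y(1) assms(4) by blast
  next
    case False
    obtain f where f: "f \<in> pedges p" "e = Some ` f" using e(1) False unfolding Cyc_eq[OF assms(1)] by auto
    obtain g where g: "g \<in> pedges q" "e = Some ` g" using e(2) False unfolding Cyc_eq[OF assms(2)] by auto
    have "f = g" using f(2) g(2) by (simp add: inj_image_eq_iff)
    then show False using f(1) g(1) assms(3) by blast
  qed
qed

theorem corollary2p1:
  fixes V :: "'a set" and E :: "'a set set"
  assumes "is_tree V E"
  shows "phi (cone_vertices V) (cone_edges V E) = card V div 2"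
proof -
  have s: "simple_graph V E" using assms unfolding is_tree_def by blast
  have fV: "finite V" using s unfolding simple_graph_def by blast
  have "connected_graph V E" using assms unfolding is_tree_def by blast
  then have Vne: "V \<noteq> {}" unfolding connected_graph_def by (rule conjunct1)
  obtain S where S: "S \<subseteq> V" "card S = 2 * (card V div 2)"
  proof (cases "even (card V)")
    case True then show ?thesis using that[of V] by simp
  next
    case False
    obtain v where v: "v \<in> V" using Vne by blast
    have "card (V - {v}) = card V - 1" using v fV by simp
    also have "\<dots> = 2 * (card V div 2)" using False by presburger
    finally show ?thesis using that[of "V - {v}"] by blast
  qed
  have "even (card S)" using S(2) by simp
  then obtain P where P: "pgood E V S P" using pairing[OF assms S(1)] by blast
  have fP: "finite P" using pgoodD1[OF P] .
  have ends2: "card {hd p, last p} = 2" if "p \<in> P" for p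
  proof -
    have "hd p \<noteq> last p" using pgoodD2[OF P that] hd_last_ne by blast
    then show ?thesis by simp
  qed
  have "card S = card (\<Union>p\<in>P. {hd p, last p})" using pgoodD4[OF P] by simp
  also have "\<dots> = (\<Sum>p\<in>P. card {hd p, last p})"
  proof (rule card_UN_disjoint[OF fP])
    show "\<forall>p\<in>P. finite {hd p, last p}" by simp
    show "\<forall>p\<in>P. \<forall>q\<in>P. p \<noteq> q \<longrightarrow> {hd p, last p} \<inter> {hd q, last q} = {}"
      using pgoodD3[OF P] by blast
  qed
  also have "\<dots> = (\<Sum>p\<in>P. 2)" using ends2 by simp
  finally have cP: "card P = card V div 2" using S(2) by simp
  have pne: "p \<noteq> []" if "p \<in> P" for p using pgoodD2[OF P that] by auto
  have disj: "Cyc p \<inter> Cyc q = {}" if "p \<in> P" "q \<in> P" "p \<noteq> q" for p q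
    using Cyc_disj[OF pne[OF that(1)] pne[OF that(2)]] pgoodD3[OF P that] by blast
  have Cne: "Cyc p \<noteq> {}" if "p \<in> P" for p unfolding Cyc_eq[OF pne[OF that]] by simp
  have inj: "inj_on Cyc P"
  proof (rule inj_onI)
    fix p q assume pq: "p \<in> P" "q \<in> P" "Cyc p = Cyc q"
    show "p = q"
    proof (rule ccontr)
      assume "p \<noteq> q"
      then have "Cyc p \<inter> Cyc q = {}" using disj pq by blast
      then have "Cyc p = {}" using pq(3) by simp
      then show False using Cne[OF pq(1)] by simp
    qed
  qed
  define F where "F = Cyc ` P"
  have cF: "card F = card V div 2" unfolding F_def using card_image[OF inj] cP by simp
  have Fsub: "F \<subseteq> cycles (cone_vertices V) (cone_edges V E)"
    unfolding F_def
  proof (rule image_subsetI)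
    fix p assume "p \<in> P"
    then have h: "distinct p \<and> 2 \<le> length p \<and> set p \<subseteq> V \<and> pedges p \<subseteq> E" by (rule pgoodD2[OF P])
    show "Cyc p \<in> cycles (cone_vertices V) (cone_edges V E)"
      using Cyc_in[of p V E] h by blast
  qed
  have Fd: "pairwise disjnt F"
    unfolding pairwise_def
  proof (intro ballI impI)
    fix C D assume C: "C \<in> F" and D: "D \<in> F" and CD: "C \<noteq> D"
    obtain p where p: "p \<in> P" "C = Cyc p" using C unfolding F_def by blast
    obtain q where q: "q \<in> P" "D = Cyc q" using D unfolding F_def by blast
    have "p \<noteq> q" using CD p q by blast
    then have "Cyc p \<inter> Cyc q = {}" using disj p q by blast
    then show "disjnt C D" unfolding disjnt_def p q .
  qed
  let ?A = "{card F | F. F \<subseteq> cycles (cone_vertices V) (cone_edges V E) \<and> pairwise disjnt F}"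
  have ub: "y \<le> card V div 2" if yA: "y \<in> ?A" for y
  proof -
    obtain G where G: "y = card G" "G \<subseteq> cycles (cone_vertices V) (cone_edges V E)" "pairwise disjnt G"
      using yA by blast
    show ?thesis unfolding G(1) by (rule upper[OF assms G(2,3)])
  qed
  have fA: "finite ?A" unfolding finite_nat_set_iff_bounded_le using ub by blast
  have mem: "card V div 2 \<in> ?A" unfolding mem_Collect_eq
    by (rule exI[of _ F]) (intro conjI cF[symmetric] Fsub Fd)
  show ?thesis unfolding phi_def by (rule Max_eqI[OF fA ub mem])
qed


end
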